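(* For $x>0$ let $q=e^{-2\pi x}$ and $\eta(ix)=q^{1/24}\prod_{n=1}^\infty(1-q^n)$. Then for every $s>0$, $$\int_0^\infty e^{-sx}\,\eta(ix)\,dx=\sqrt{\frac{\pi}{s}}\;\frac{\sinh\big(2\sqrt{\pi s/3}\big)}{\cosh\big(\sqrt{3\pi s}\big)}.$$
   Context: $\eta$ is the Dedekind eta function, evaluated on the positive imaginary axis. *)

theory Defs
  imports "HOL-Analysis.Analysis"
begin

definition eta_imag :: "real \<Rightarrow> real" where
  "eta_imag x = (let q = exp (- 2 * pi * x) in
      q powr (1/24) * (\<Prod>n. (1 - q ^ Suc n)))"

end

theory Submission
  imports Defs
begin

fun tri :: "nat \<Rightarrow> nat" where
  "tri 0 = 0" | "tri (Suc j) = tri j + Suc j"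

lemma tri_eq: "2 * tri j = j * (j + 1)"
  by (induction j) (auto simp: algebra_simps)

definition AA :: "real \<Rightarrow> nat \<Rightarrow> nat \<Rightarrow> real" where
  "AA q N j = (\<Prod>k\<in>{Suc j..N}. 1 - q ^ k)"

definition SS :: "real \<Rightarrow> nat \<Rightarrow> real" where
  "SS q N = (\<Sum>j\<le>N. (-1)^j * AA q N j * q ^ (j * N + tri j))"

definition UU :: "real \<Rightarrow> nat \<Rightarrow> real" where
  "UU q n = (\<Sum>m<n. (-1)^m * (q ^ (m^2 + tri m) - q ^ ((m+1)^2 + tri m)))"

lemma AA_Suc_N: "j \<le> N \<Longrightarrow> AA q (Suc N) j = AA q N j * (1 - q ^ Suc N)"
  unfolding AA_def by (simp)

lemma AA_step: "j < N \<Longrightarrow> AA q N j = (1 - q ^ Suc j) * AA q N (Suc j)"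
  unfolding AA_def by (subst prod.atLeast_Suc_atMost) auto

lemma AA_N [simp]: "AA q N N = 1"
  unfolding AA_def by simp

lemma SS_rec:
  "SS q (Suc N) = SS q N + (-1)^(Suc N) * (q ^ ((N+1)^2 + tri N) + q ^ ((N+1)^2 + tri (N+1)))"
proof -
  define t where "t M j = (-1)^j * AA q M j * q ^ (j * M + tri j)" for M j
  define g where "g j = (-1)^j * AA q N j * (1 - q^j) * q ^ (j * N + tri j)" for j
  have d1: "t (Suc N) j - t N j = g (Suc j) - g j" if "j < N" for j
  proof -
    have e1: "q ^ (j * Suc N + tri j) = q ^ (j * N + tri j) * q ^ j"
      by (simp add: power_add algebra_simps)
    have e2: "q ^ (Suc j * N + tri (Suc j)) = q ^ (j * N + tri j) * q ^ (N + j + 1)"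
      by (simp add: power_add algebra_simps)
    show ?thesis
      unfolding t_def g_def using that
      by (simp add: AA_Suc_N AA_step[OF that] e1 e2 power_add algebra_simps)
  qed
  have d2: "t (Suc N) N - t N N = - g N - (-1)^N * q ^ ((N+1)^2 + tri N)"
    unfolding t_def g_def
    by (simp add: AA_Suc_N power_add power2_eq_square algebra_simps)
  have "SS q (Suc N) = (\<Sum>j\<le>N. t (Suc N) j) + t (Suc N) (Suc N)"
    unfolding SS_def t_def by simp
  also have "(\<Sum>j\<le>N. t (Suc N) j) = (\<Sum>j\<le>N. t N j) + (\<Sum>j\<le>N. t (Suc N) j - t N j)"
    by (simp add: sum_subtractf)
  also have "(\<Sum>j\<le>N. t (Suc N) j - t N j) = (\<Sum>j<N. t (Suc N) j - t N j) + (t (Suc N) N - t N N)"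
    by (simp add: lessThan_Suc_atMost[symmetric])
  also have "(\<Sum>j<N. t (Suc N) j - t N j) = (\<Sum>j<N. g (Suc j) - g j)"
    by (intro sum.cong) (auto simp: d1)
  also have "\<dots> = g N - g 0" by (rule sum_lessThan_telescope)
  also have "g 0 = 0" by (simp add: g_def)
  also have "(\<Sum>j\<le>N. t N j) = SS q N" unfolding SS_def t_def by simp
  also have "t (Suc N) (Suc N) = (-1)^(Suc N) * q ^ ((N+1)^2 + tri (N+1))"
    by (simp add: t_def power2_eq_square algebra_simps)
  finally show ?thesis using d2 by (simp add: algebra_simps)
qed

lemma SS_UU: "SS q N = UU q N + (-1)^N * q ^ (N^2 + tri N)"
proof (induction N)
  case 0 then show ?case by (simp add: SS_def UU_def)
next
  case (Suc N)
  show ?case unfolding SS_rec Suc UU_def by (simp add: algebra_simps)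
qed

lemma le_sq_tri [simp]: "m \<le> m * m + tri (m::nat)"
  using le_square[of m] by linarith

definition pterm :: "real \<Rightarrow> nat \<Rightarrow> real" where
  "pterm q m = (-1)^m * (q ^ (m^2 + tri m) - q ^ ((m+1)^2 + tri m))"

lemma pterm_bound:
  assumes "0 \<le> q" "q < 1"
  shows "\<bar>pterm q m\<bar> \<le> q ^ m"
proof -
  have a: "q ^ ((m+1)^2 + tri m) \<le> q ^ (m^2 + tri m)"
    using assms by (intro power_decreasing) (auto simp: power2_eq_square)
  have b: "q ^ (m^2 + tri m) \<le> q ^ m"
    using assms by (intro power_decreasing) (auto simp: power2_eq_square)
  have "\<bar>pterm q m\<bar> = q ^ (m^2 + tri m) - q ^ ((m+1)^2 + tri m)"
    using a by (simp add: pterm_def abs_mult)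
  also have "\<dots> \<le> q ^ m" using b assms zero_le_power[of q "(m+1)^2 + tri m"] by linarith
  finally show ?thesis .
qed

lemma summable_pterm:
  assumes "0 \<le> q" "q < 1"
  shows "summable (pterm q)"
  by (rule summable_comparison_test[of _ "\<lambda>m. q ^ m"])
     (use assms pterm_bound in \<open>auto intro!: summable_geometric\<close>)

lemma AA_bounds:
  assumes "0 \<le> q" "q < 1"
  shows "0 \<le> AA q N j \<and> AA q N j \<le> 1"
proof -
  have "\<And>k. 0 \<le> 1 - q ^ k \<and> 1 - q ^ k \<le> 1"
    using assms by (simp add: power_le_one)
  then show ?thesis unfolding AA_def
    by (auto intro!: prod_nonneg prod_le_1)
qed

lemma pentagonal_lim:
  assumes "0 < q" "q < 1"
  shows "(\<lambda>N. AA q N 0) \<longlonglongrightarrow> (\<Sum>m. pterm q m)"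
proof -
  have U: "(\<lambda>N. UU q N) \<longlonglongrightarrow> (\<Sum>m. pterm q m)"
    using summable_pterm[of q] assms unfolding UU_def pterm_def[symmetric]
    by (simp add: summable_LIMSEQ)
  have z1: "(\<lambda>N. (-1)^N * q ^ (N^2 + tri N)) \<longlonglongrightarrow> 0"
  proof (rule Lim_null_comparison[of _ "\<lambda>N. q ^ N"])
    show "\<forall>\<^sub>F N in sequentially. norm ((-1)^N * q ^ (N^2 + tri N)) \<le> q ^ N"
      using assms by (intro always_eventually allI)
        (auto simp: abs_mult power_abs intro!: power_decreasing simp: power2_eq_square)
    show "(\<lambda>N. q ^ N) \<longlonglongrightarrow> 0" using assms by (intro LIMSEQ_power_zero) auto
  qed
  have z2: "(\<lambda>N. SS q N - AA q N 0) \<longlonglongrightarrow> 0"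
  proof (rule Lim_null_comparison[of _ "\<lambda>N. of_nat N * q ^ N"])
    show "(\<lambda>N. of_nat N * q ^ N) \<longlonglongrightarrow> 0"
      using assms by (intro powser_times_n_limit_0) auto
    show "\<forall>\<^sub>F N in sequentially. norm (SS q N - AA q N 0) \<le> of_nat N * q ^ N"
    proof (intro always_eventually allI)
      fix N
      have "SS q N = AA q N 0 + (\<Sum>j\<in>{1..N}. (-1)^j * AA q N j * q ^ (j * N + tri j))"
        unfolding SS_def by (simp add: atMost_atLeast0 sum.atLeast_Suc_atMost)
      then have "norm (SS q N - AA q N 0) = \<bar>\<Sum>j\<in>{1..N}. (-1)^j * AA q N j * q ^ (j * N + tri j)\<bar>"
        by simp
      also have "\<dots> \<le> (\<Sum>j\<in>{1..N}. \<bar>(-1)^j * AA q N j * q ^ (j * N + tri j)\<bar>)"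
        by (rule sum_abs)
      also have "\<dots> \<le> (\<Sum>j\<in>{1..N}. q ^ N)"
      proof (intro sum_mono)
        fix j assume j: "j \<in> {1..N}"
        have "\<bar>(-1)^j * AA q N j * q ^ (j * N + tri j)\<bar> = AA q N j * q ^ (j * N + tri j)"
          using AA_bounds[of q N j] assms by (simp add: abs_mult)
        also have "\<dots> \<le> 1 * q ^ (j * N + tri j)"
          using AA_bounds[of q N j] assms by (intro mult_right_mono) auto
        also have "\<dots> \<le> q ^ N"
        proof -
          have "N \<le> j * N + tri j" using j by (simp add: trans_le_add1)
          then show ?thesis using assms by (simp add: power_decreasing)
        qed
        finally show "\<bar>(-1)^j * AA q N j * q ^ (j * N + tri j)\<bar> \<le> q ^ N" .
      qed
      also have "\<dots> = of_nat N * q ^ N" by simp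
      finally show "norm (SS q N - AA q N 0) \<le> of_nat N * q ^ N" .
    qed
  qed
  have "(\<lambda>N. UU q N + (-1)^N * q ^ (N^2 + tri N) - (SS q N - AA q N 0)) \<longlonglongrightarrow> (\<Sum>m. pterm q m) + 0 - 0"
    by (intro tendsto_intros U z1 z2)
  then show ?thesis by (simp add: SS_UU)
qed

lemma prodinf_pentagonal:
  assumes "0 < q" "q < 1"
  shows "prodinf (\<lambda>n. 1 - q ^ Suc n) = (\<Sum>m. pterm q m)"
proof -
  have "convergent_prod (\<lambda>n. 1 + (-(q ^ Suc n)))"
  proof (rule summable_imp_convergent_prod_real)
    show "summable (\<lambda>k. \<bar>-(q ^ Suc k)\<bar>)"
      using assms by (simp add: summable_geometric)
    show "-(q ^ Suc k) \<noteq> - 1" for k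
      using assms power_strict_decreasing[of 0 "Suc k" q] by auto
  qed
  then have "(\<lambda>n. \<Prod>i\<le>n. 1 - q ^ Suc i) \<longlonglongrightarrow> prodinf (\<lambda>n. 1 - q ^ Suc n)"
    by (intro convergent_prod_LIMSEQ) simp
  moreover have "(\<lambda>n. \<Prod>i\<le>n. 1 - q ^ Suc i) = (\<lambda>n. AA q (Suc n) 0)"
    unfolding AA_def prod.atLeast_Suc_atMost_Suc_shift by (simp add: atMost_atLeast0 o_def)
  moreover have "(\<lambda>n. AA q (Suc n) 0) \<longlonglongrightarrow> (\<Sum>m. pterm q m)"
    using pentagonal_lim[OF assms] by (rule LIMSEQ_Suc)
  ultimately show ?thesis using LIMSEQ_unique by metis
qed

lemma exp_has_int_pos:
  assumes "(c::real) > 0"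
  shows "((\<lambda>x. exp (-c*x)) has_integral 1/c) {0<..}"
proof -
  have "((\<lambda>x. exp (-c*x)) has_integral exp (-c*0)/c) {0..}"
    using assms by (rule has_integral_exp_minus_to_infinity)
  then show ?thesis
    by (subst has_integral_spike_set_eq[of "{0<..}" "{0..}"])
       (auto intro: negligible_subset[OF negligible_sing[of 0]])
qed

lemma exp_set_int:
  assumes "(c::real) > 0"
  shows "set_integrable lebesgue {0<..} (\<lambda>x. exp (-c*x))"
    "(LINT x:{0<..}|lebesgue. exp (-c*x)) = 1/c"
proof -
  have h: "((\<lambda>x. exp (-c*x)) has_integral 1/c) {0<..}" using assms by (rule exp_has_int_pos)
  show si: "set_integrable lebesgue {0<..} (\<lambda>x. exp (-c*x))"
    using h by (intro nonnegative_absolutely_integrable_1) (auto simp: integrable_on_def)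
  show "(LINT x:{0<..}|lebesgue. exp (-c*x)) = 1/c"
    using set_lebesgue_integral_eq_integral(2)[OF si] h by (simp add: integral_unique)
qed

definition aa :: "nat \<Rightarrow> real" where "aa m = pi * (6 * real m + 1)^2 / 12"
definition bb :: "nat \<Rightarrow> real" where "bb m = pi * (6 * real m + 5)^2 / 12"

lemma aa_pos: "aa m > 0" and aa_le_bb: "aa m \<le> bb m"
  by (auto simp: aa_def bb_def intro!: mult_left_mono power_mono)

lemma aa_ge: "pi * real m \<le> aa m"
proof -
  have "12 * real m \<le> (6 * real m + 1)^2" by (simp add: power2_eq_square algebra_simps)
  then have "pi * (12 * real m) \<le> pi * (6 * real m + 1)^2" by (intro mult_left_mono) auto
  then show ?thesis by (simp add: aa_def)
qed

definition hh :: "real \<Rightarrow> nat \<Rightarrow> real" where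
  "hh x m = (-1)^m * (exp (- aa m * x) - exp (- bb m * x))"

lemma real_tri: "real (tri m) = real m * (real m + 1) / 2"
proof -
  have "real (2 * tri m) = real (m * (m + 1))" by (simp only: tri_eq)
  then show ?thesis by (simp add: algebra_simps)
qed

lemma eta_series:
  assumes "x > 0"
  shows "eta_imag x = (\<Sum>m. hh x m)"
proof -
  define q where "q = exp (- 2 * pi * x)"
  have q: "0 < q" "q < 1" using assms by (auto simp: q_def)
  have "eta_imag x = q powr (1/24) * (\<Sum>m. pterm q m)"
    unfolding eta_imag_def Let_def q_def[symmetric] using prodinf_pentagonal[OF q] by simp
  also have "\<dots> = (\<Sum>m. q powr (1/24) * pterm q m)"
    using summable_pterm[of q] q by (simp add: suminf_mult)
  also have "(\<lambda>m. q powr (1/24) * pterm q m) = hh x"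
  proof
    fix m
    have e: "q powr (1/24) * q ^ n = exp (- 2 * pi * x * (1/24 + real n))" for n
      by (simp add: q_def powr_def exp_of_nat_mult[symmetric] exp_add[symmetric] algebra_simps)
    have 1: "1/24 + real (m^2 + tri m) = (6 * real m + 1)^2 / 24"
      by (simp add: real_tri power2_eq_square field_simps)
    have 2: "1/24 + real ((m+1)^2 + tri m) = (6 * real m + 5)^2 / 24"
      by (simp add: real_tri power2_eq_square field_simps)
    show "q powr (1/24) * pterm q m = hh x m"
      unfolding pterm_def hh_def aa_def bb_def
      by (simp only: right_diff_distrib mult.left_commute[of "q powr (1/24)"] e 1 2)
         (simp add: algebra_simps)
  qed
  finally show ?thesis .
qed

lemma hh_abs:
  assumes "x \<ge> 0"
  shows "\<bar>hh x m\<bar> = exp (- aa m * x) - exp (- bb m * x)"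
proof -
  have "exp (- bb m * x) \<le> exp (- aa m * x)"
    using aa_le_bb[of m] assms by (simp add: mult_right_mono)
  then show ?thesis by (simp add: hh_def abs_mult)
qed

lemma hh_bound:
  assumes "x \<ge> 0"
  shows "\<bar>hh x m\<bar> \<le> exp (- pi * x) ^ m"
proof -
  have "\<bar>hh x m\<bar> \<le> exp (- aa m * x)" using hh_abs[OF assms, of m] by simp
  also have "\<dots> \<le> exp (- (pi * real m) * x)"
    using aa_ge[of m] assms by (simp add: mult_right_mono)
  also have "\<dots> = exp (- pi * x) ^ m"
    by (simp add: exp_of_nat_mult[symmetric] algebra_simps)
  finally show ?thesis .
qed

lemma summable_hh:
  assumes "x > 0"
  shows "summable (\<lambda>m. \<bar>hh x m\<bar>)"
  by (rule summable_comparison_test[of _ "\<lambda>m. exp (- pi * x) ^ m"])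
     (use assms hh_bound in \<open>auto intro!: summable_geometric\<close>)

lemma summable_coef:
  assumes "s > 0"
  shows "summable (\<lambda>m. 1/(s + aa m) - 1/(s + bb m))"
proof (rule summable_comparison_test[of _ "\<lambda>m. (12/pi) * (1 / (real m + 1)^2)"])
  show "summable (\<lambda>m. (12/pi) * (1 / (real m + 1)^2))"
    using inverse_squares_sums by (intro summable_mult) (simp add: sums_iff add.commute)
  show "\<exists>N. \<forall>n\<ge>N. norm (1/(s + aa n) - 1/(s + bb n)) \<le> 12/pi * (1 / (real n + 1)^2)"
  proof (intro exI allI impI)
    fix n :: nat
    have p: "0 < s + aa n" "s + aa n \<le> s + bb n" using assms aa_pos[of n] aa_le_bb[of n] by auto
    have "norm (1/(s + aa n) - 1/(s + bb n)) = 1/(s + aa n) - 1/(s + bb n)"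
      using p by (simp add: frac_le)
    also have "\<dots> \<le> 1/(s + aa n)" using p by simp
    also have "\<dots> \<le> 1 / aa n" using assms aa_pos[of n] by (simp add: frac_le)
    also have "\<dots> \<le> 12/pi * (1 / (real n + 1)^2)"
    proof -
      have "(real n + 1)^2 \<le> (6 * real n + 1)^2" by (intro power_mono) auto
      then have "pi * (real n + 1)^2 \<le> pi * (6 * real n + 1)^2" by (intro mult_left_mono) auto
      then show ?thesis unfolding aa_def using pi_gt_zero
        by (simp add: field_simps)
    qed
    finally show "norm (1/(s + aa n) - 1/(s + bb n)) \<le> 12/pi * (1 / (real n + 1)^2)" .
  qed
qed

lemma laplace_series:
  assumes s: "s > 0"
  shows "((\<lambda>x. exp (- s * x) * eta_imag x) has_integral
            (\<Sum>m. (-1)^m * (1/(s + aa m) - 1/(s + bb m)))) {0<..}"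
proof -
  define A where "A = ({0<..} :: real set)"
  define F where "F m x = indicator A x * (exp (- s * x) * hh x m)" for m x
  define E where "E c x = indicator A x * exp (- c * x)" for c x :: real
  have Eint: "integrable lebesgue (E c)" "integral\<^sup>L lebesgue (E c) = 1/c" if "c > 0" for c
    using exp_set_int[OF that] unfolding set_integrable_def set_lebesgue_integral_def E_def A_def
    by auto
  have Fe: "F m = (\<lambda>x. (-1)^m * (E (s + aa m) x - E (s + bb m) x))" for m
    by (auto simp: F_def E_def hh_def fun_eq_iff algebra_simps exp_add[symmetric])
  have cpos: "s + aa m > 0" "s + bb m > 0" for m
    using s aa_pos[of m] aa_le_bb[of m] by auto
  have Fint: "integrable lebesgue (F m)" for m
    unfolding Fe using Eint cpos by auto
  have Fval: "integral\<^sup>L lebesgue (F m) = (-1)^m * (1/(s + aa m) - 1/(s + bb m))" for m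
    unfolding Fe using Eint cpos by (simp add: integral_diff)
  have Fnorm: "(\<lambda>x. norm (F m x)) = (\<lambda>x. E (s + aa m) x - E (s + bb m) x)" for m
  proof
    fix x
    show "norm (F m x) = E (s + aa m) x - E (s + bb m) x"
    proof (cases "x \<in> A")
      case True
      then have "x \<ge> 0" by (simp add: A_def)
      then show ?thesis using True
        by (simp add: F_def E_def abs_mult hh_abs algebra_simps exp_add[symmetric])
    qed (simp add: F_def E_def)
  qed
  have Fnormval: "(\<integral>x. norm (F m x) \<partial>lebesgue) = 1/(s + aa m) - 1/(s + bb m)" for m
    unfolding Fnorm using Eint cpos by (simp add: integral_diff)
  have sumAE: "AE x in lebesgue. summable (\<lambda>m. norm (F m x))"
  proof (intro AE_I2)
    fix x :: real
    show "summable (\<lambda>m. norm (F m x))"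
    proof (cases "x \<in> A")
      case True
      then have "x > 0" by (simp add: A_def)
      have "summable (\<lambda>m. exp (- s * x) * \<bar>hh x m\<bar>)"
        using summable_hh[OF \<open>x > 0\<close>] by (rule summable_mult)
      then show ?thesis using True by (simp add: F_def abs_mult)
    qed (simp add: F_def)
  qed
  have sumI: "summable (\<lambda>m. \<integral>x. norm (F m x) \<partial>lebesgue)"
    unfolding Fnormval using summable_coef[OF s] .
  have I: "integrable lebesgue (\<lambda>x. \<Sum>m. F m x)"
    and S: "(\<lambda>m. integral\<^sup>L lebesgue (F m)) sums (\<integral>x. (\<Sum>m. F m x) \<partial>lebesgue)"
    using integrable_suminf[OF Fint sumAE sumI] sums_integral[OF Fint sumAE sumI] by auto
  have eqf: "(\<lambda>x. \<Sum>m. F m x) = (\<lambda>x. if x \<in> A then exp (- s * x) * eta_imag x else 0)"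
  proof
    fix x
    show "(\<Sum>m. F m x) = (if x \<in> A then exp (- s * x) * eta_imag x else 0)"
    proof (cases "x \<in> A")
      case True
      then have "x > 0" by (simp add: A_def)
      have "summable (hh x)" using summable_hh[OF \<open>x > 0\<close>] by (rule summable_rabs_cancel)
      then show ?thesis using True eta_series[OF \<open>x > 0\<close>]
        by (simp add: F_def suminf_mult)
    qed (simp add: F_def)
  qed
  have "((\<lambda>x. \<Sum>m. F m x) has_integral (\<integral>x. (\<Sum>m. F m x) \<partial>lebesgue)) UNIV"
    using I by (rule has_integral_integral_lebesgue)
  then have "((\<lambda>x. exp (- s * x) * eta_imag x) has_integral (\<integral>x. (\<Sum>m. F m x) \<partial>lebesgue)) A"
    unfolding eqf has_integral_restrict_UNIV .
  moreover have "(\<integral>x. (\<Sum>m. F m x) \<partial>lebesgue) = (\<Sum>m. (-1)^m * (1/(s + aa m) - 1/(s + bb m)))"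
    using S unfolding Fval by (simp add: sums_iff)
  ultimately show ?thesis by (simp add: A_def)
qed

lemma sin_pi_nonzero:
  fixes z :: complex
  assumes "z \<notin> \<int>"
  shows "sin (of_real pi * z) \<noteq> 0"
proof
  assume "sin (of_real pi * z) = 0"
  then obtain n :: int where "of_real pi * z = of_real (n * pi)" by (auto simp: sin_eq_0)
  then have "z = of_int n" by (simp add: field_simps)
  with assms show False by auto
qed

lemma digamma_refl:
  fixes z :: complex
  assumes z: "z \<notin> \<int>"
  shows "Digamma (1 - z) - Digamma z = of_real pi * cot (of_real pi * z)"
proof -
  define G where "G w = Gamma w * Gamma (1 - w)" for w :: complex
  define R where "R w = of_real pi / sin (of_real pi * w)" for w :: complex
  have z1: "1 - z \<notin> \<int>" using z Ints_diff[of 1 "1 - z"] by auto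
  have np: "z \<notin> \<int>\<^sub>\<le>\<^sub>0" "1 - z \<notin> \<int>\<^sub>\<le>\<^sub>0" using z z1 nonpos_Ints_subset_Ints by auto
  have sz: "sin (of_real pi * z) \<noteq> 0" using sin_pi_nonzero[OF z] .
  have ev: "eventually (\<lambda>w. w \<in> UNIV - \<int>) (nhds z)"
    using z by (intro eventually_nhds_in_open) (auto simp: open_Diff)
  have ev2: "eventually (\<lambda>w. G w = R w) (nhds z)"
    using ev by eventually_elim (simp add: G_def R_def Gamma_reflection_complex)
  have dG: "(G has_field_derivative (Gamma z * Digamma z * Gamma (1 - z) +
               Gamma z * (Gamma (1 - z) * Digamma (1 - z) * (-1)))) (at z)"
    unfolding G_def using np by (auto intro!: derivative_eq_intros)
  have dR: "(R has_field_derivative (- (of_real pi * (cos (of_real pi * z) * of_real pi)) /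
               (sin (of_real pi * z))^2)) (at z)"
    unfolding R_def using sz by (auto intro!: derivative_eq_intros simp: power2_eq_square)
  have dG': "(R has_field_derivative (Gamma z * Digamma z * Gamma (1 - z) +
               Gamma z * (Gamma (1 - z) * Digamma (1 - z) * (-1)))) (at z)"
    using dG by (subst (asm) DERIV_cong_ev[OF refl ev2 refl])
  have eq: "Gamma z * Digamma z * Gamma (1 - z) + Gamma z * (Gamma (1 - z) * Digamma (1 - z) * (-1))
      = - (of_real pi * (cos (of_real pi * z) * of_real pi)) / (sin (of_real pi * z))^2"
    using DERIV_unique[OF dG' dR] .
  have Gz: "Gamma z * Gamma (1 - z) = of_real pi / sin (of_real pi * z)"
    by (rule Gamma_reflection_complex)
  have "Gamma z * Gamma (1 - z) * (Digamma z - Digamma (1 - z)) =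
        - (of_real pi * (cos (of_real pi * z) * of_real pi)) / (sin (of_real pi * z))^2"
    using eq by (simp add: algebra_simps)
  then have "of_real pi / sin (of_real pi * z) * (Digamma z - Digamma (1 - z)) =
        - (of_real pi * (cos (of_real pi * z) * of_real pi)) / (sin (of_real pi * z))^2"
    by (simp add: Gz)
  then have P: "of_real pi / sin (of_real pi * z) * (Digamma z - Digamma (1 - z)) =
        - (of_real pi * (cos (of_real pi * z) * of_real pi)) / (sin (of_real pi * z))^2" .
  have "Digamma z - Digamma (1 - z) = (sin (of_real pi * z) / of_real pi) *
          (of_real pi / sin (of_real pi * z) * (Digamma z - Digamma (1 - z)))"
    using sz by simp
  also have "\<dots> = - of_real pi * cos (of_real pi * z) / sin (of_real pi * z)"
    unfolding P using sz by (simp add: power2_eq_square)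
  finally have "Digamma z - Digamma (1 - z) = - of_real pi * cos (of_real pi * z) / sin (of_real pi * z)" .
  then show ?thesis by (simp add: cot_def algebra_simps)
qed

lemma cot_pf:
  fixes z :: complex
  assumes z: "z \<notin> \<int>"
  shows "(\<lambda>k. 1 / (z + of_nat k) - 1 / (of_nat k + 1 - z)) sums (of_real pi * cot (of_real pi * z))"
proof -
  have z0: "z \<noteq> 0" using z by auto
  have z1: "1 - z \<noteq> 0" using z by auto
  have s1: "summable (\<lambda>n. inverse (of_nat (Suc n)) - inverse (z + of_nat n))"
    using summable_Digamma[OF z0] .
  have s2: "summable (\<lambda>n. inverse (of_nat (Suc n)) - inverse ((1 - z) + of_nat n))"
    using summable_Digamma[OF z1] .
  have "(\<lambda>n. (inverse (of_nat (Suc n)) - inverse ((1 - z) + of_nat n)) -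
             (inverse (of_nat (Suc n)) - inverse (z + of_nat n))) sums
        ((\<Sum>n. inverse (of_nat (Suc n)) - inverse ((1 - z) + of_nat n)) -
         (\<Sum>n. inverse (of_nat (Suc n)) - inverse (z + of_nat n)))"
    using s1 s2 by (intro sums_diff summable_sums)
  also have "\<dots> = Digamma (1 - z) - Digamma z"
    by (simp add: Digamma_def)
  also have "\<dots> = of_real pi * cot (of_real pi * z)" using digamma_refl[OF z] .
  finally show ?thesis
    by (simp add: divide_inverse algebra_simps)
qed

lemma sin_ii_real: "sin (\<i> * complex_of_real t) = \<i> * of_real (sinh t)"
  by (simp add: sin_exp_eq sinh_def exp_of_real[symmetric] field_simps scaleR_conv_of_real)

lemma cos_ii_real: "cos (\<i> * complex_of_real t) = of_real (cosh t)"
  by (simp add: cos_exp_eq cosh_def exp_of_real[symmetric] field_simps scaleR_conv_of_real)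

lemma cot_diff:
  fixes u v :: complex
  assumes "sin u \<noteq> 0" "sin v \<noteq> 0"
  shows "cot u - cot v = 2 * sin (v - u) / (cos (u - v) - cos (u + v))"
proof -
  have "cos (u - v) - cos (u + v) = 2 * sin u * sin v"
    by (simp add: cos_diff cos_add)
  moreover have "sin (v - u) = sin v * cos u - cos v * sin u" by (simp add: sin_diff)
  ultimately show ?thesis using assms by (simp add: cot_def field_simps)
qed

lemma cot_conj_diff:
  fixes a b :: real
  assumes "sin (complex_of_real a - \<i> * of_real b) \<noteq> 0" "sin (complex_of_real a + \<i> * of_real b) \<noteq> 0"
  shows "cot (complex_of_real a - \<i> * of_real b) - cot (complex_of_real a + \<i> * of_real b) =
         \<i> * of_real (2 * sinh (2*b) / (cosh (2*b) - cos (2*a)))"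
proof -
  have 1: "(complex_of_real a + \<i> * of_real b) - (complex_of_real a - \<i> * of_real b) = \<i> * of_real (2*b)"
    by simp
  have 2: "(complex_of_real a - \<i> * of_real b) - (complex_of_real a + \<i> * of_real b) = \<i> * of_real (-2*b)"
    by simp
  have 3: "(complex_of_real a - \<i> * of_real b) + (complex_of_real a + \<i> * of_real b) = of_real (2*a)"
    by simp
  show ?thesis
    unfolding cot_diff[OF assms] 1 2 3 sin_ii_real cos_ii_real cos_of_real
    by simp
qed

definition Q :: "real \<Rightarrow> real \<Rightarrow> complex" where
  "Q n e = 1 / (of_real n + \<i> * of_real e)"

lemma Qdiff:
  assumes "g \<noteq> 0"
  shows "Q n (-g) - Q n g = 2 * \<i> * of_real g * of_real (1 / (n^2 + g^2))"
proof -
  have a: "complex_of_real n + \<i> * of_real g \<noteq> 0"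
    using assms by (auto simp: complex_eq_iff)
  have b: "complex_of_real n - \<i> * of_real g \<noteq> 0"
    using assms by (auto simp: complex_eq_iff)
  have c: "n^2 + g^2 \<noteq> 0" using assms by (simp add: add_nonneg_eq_0_iff)
  have d: "(complex_of_real n - \<i> * of_real g) * (complex_of_real n + \<i> * of_real g) = of_real (n^2 + g^2)"
    by (simp add: algebra_simps power2_eq_square)
  have "Q n (-g) - Q n g = ((complex_of_real n + \<i> * of_real g) - (complex_of_real n - \<i> * of_real g)) /
          ((complex_of_real n - \<i> * of_real g) * (complex_of_real n + \<i> * of_real g))"
    unfolding Q_def using a b by (simp add: field_simps)
  also have "\<dots> = 2 * \<i> * of_real g / of_real (n^2 + g^2)" unfolding d by simp
  finally show ?thesis by (simp add: divide_inverse)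
qed

lemma inv_z1:
  "1 / (complex_of_real (r/12) + \<i> * of_real (e/12) + of_nat l) = 12 * Q (12 * real l + r) e"
proof -
  have "complex_of_real (r/12) + \<i> * of_real (e/12) + of_nat l =
        (of_real (12 * real l + r) + \<i> * of_real e) / 12"
    by (simp add: field_simps)
  note eq = this
  show ?thesis by (subst eq) (simp add: Q_def)
qed

lemma inv_z2:
  "1 / (of_nat l + 1 - (complex_of_real (r/12) + \<i> * of_real (e/12))) = 12 * Q (12 * real l + 12 - r) (-e)"
proof -
  have "of_nat l + 1 - (complex_of_real (r/12) + \<i> * of_real (e/12)) =
        (of_real (12 * real l + 12 - r) + \<i> * of_real (-e)) / 12"
    by (simp add: field_simps)
  note eq = this
  show ?thesis by (subst eq) (simp add: Q_def)
qed

lemma not_Int_imag: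
  assumes "e \<noteq> 0"
  shows "complex_of_real a + \<i> * of_real e \<notin> \<int>"
proof
  assume "complex_of_real a + \<i> * of_real e \<in> \<int>"
  then obtain n :: int where "complex_of_real a + \<i> * of_real e = of_int n" by (auto elim: Ints_cases)
  then have "Im (complex_of_real a + \<i> * of_real e) = Im (of_int n)" by simp
  with assms show False by simp
qed

definition dd :: "real \<Rightarrow> nat \<Rightarrow> real" where
  "dd g l = 1 / ((12 * real l + 1)^2 + g^2) - 1 / ((12 * real l + 5)^2 + g^2)
          - 1 / ((12 * real l + 7)^2 + g^2) + 1 / ((12 * real l + 11)^2 + g^2)"

lemma cot_sum:
  assumes "e \<noteq> 0"
  shows "(\<lambda>l. 12 * Q (12 * real l + r) e - 12 * Q (12 * real l + 12 - r) (-e)) sums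
           (of_real pi * cot (of_real (pi * r / 12) + \<i> * of_real (pi * e / 12)))"
proof -
  define z where "z = complex_of_real (r/12) + \<i> * of_real (e/12)"
  have "z \<notin> \<int>" unfolding z_def using assms by (intro not_Int_imag) simp
  from cot_pf[OF this] have "(\<lambda>k. 1 / (z + of_nat k) - 1 / (of_nat k + 1 - z)) sums
      (of_real pi * cot (of_real pi * z))" .
  moreover have "of_real pi * z = of_real (pi * r / 12) + \<i> * of_real (pi * e / 12)"
    by (simp add: z_def algebra_simps)
  moreover have "(\<lambda>k. 1 / (z + of_nat k) - 1 / (of_nat k + 1 - z)) =
      (\<lambda>l. 12 * Q (12 * real l + r) e - 12 * Q (12 * real l + 12 - r) (-e))"
    unfolding z_def inv_z2[symmetric] inv_z1[symmetric] by (simp add: add_ac)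
  ultimately show ?thesis by simp
qed

lemma sin_nz:
  assumes "e \<noteq> 0"
  shows "sin (complex_of_real a + \<i> * of_real e) \<noteq> 0"
proof
  assume "sin (complex_of_real a + \<i> * of_real e) = 0"
  then obtain n :: int where "complex_of_real a + \<i> * of_real e = of_real (n * pi)"
    by (auto simp: sin_eq_0)
  then have "Im (complex_of_real a + \<i> * of_real e) = Im (of_real (n * pi))" by simp
  with assms show False by simp
qed

lemma sin_nz':
  assumes "e \<noteq> 0"
  shows "sin (complex_of_real a - \<i> * of_real e) \<noteq> 0"
  using sin_nz[of "-e" a] assms by simp

lemma key_sum:
  assumes g: "g > 0"
  defines "X1 \<equiv> 2 * sinh (pi * g / 6) / (cosh (pi * g / 6) - cos (pi / 6))"
  defines "X3 \<equiv> 2 * sinh (pi * g / 6) / (cosh (pi * g / 6) - cos (5 * pi / 6))"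
  shows "dd g sums (pi / (24 * g) * (X1 - X3))"
proof -
  define K where "K r e l = 12 * Q (12 * real l + r) e - 12 * Q (12 * real l + 12 - r) (-e)" for r e l
  have g0: "g \<noteq> 0" "-g \<noteq> 0" using g by auto
  have b0: "pi * g / 12 \<noteq> 0" using g by simp
  have S: "K r e sums (of_real pi * cot (of_real (pi * r / 12) + \<i> * of_real (pi * e / 12)))"
    if "e \<noteq> 0" for r e
    unfolding K_def using cot_sum[OF that] .
  have c1: "cot (of_real (pi * 1 / 12) + \<i> * of_real (pi * (-g) / 12)) -
            cot (of_real (pi * 1 / 12) + \<i> * of_real (pi * g / 12)) = \<i> * of_real X1"
    using cot_conj_diff[OF sin_nz'[OF b0] sin_nz[OF b0], of "pi / 12"]
    by (simp add: X1_def field_simps)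
  have c3: "cot (of_real (pi * 5 / 12) + \<i> * of_real (pi * (-g) / 12)) -
            cot (of_real (pi * 5 / 12) + \<i> * of_real (pi * g / 12)) = \<i> * of_real X3"
    using cot_conj_diff[OF sin_nz'[OF b0] sin_nz[OF b0], of "pi * 5 / 12"]
    by (simp add: X3_def mult.commute)
  have "(\<lambda>l. ((K 1 (-g) l - K 1 g l) - (K 5 (-g) l - K 5 g l)) / (24 * \<i> * of_real g)) sums
        (((of_real pi * cot (of_real (pi * 1 / 12) + \<i> * of_real (pi * (-g) / 12)) -
           of_real pi * cot (of_real (pi * 1 / 12) + \<i> * of_real (pi * g / 12))) -
          (of_real pi * cot (of_real (pi * 5 / 12) + \<i> * of_real (pi * (-g) / 12)) -
           of_real pi * cot (of_real (pi * 5 / 12) + \<i> * of_real (pi * g / 12)))) / (24 * \<i> * of_real g))"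
    by (intro sums_divide sums_diff S g0)
  also have "(((of_real pi * cot (of_real (pi * 1 / 12) + \<i> * of_real (pi * (-g) / 12)) -
           of_real pi * cot (of_real (pi * 1 / 12) + \<i> * of_real (pi * g / 12))) -
          (of_real pi * cot (of_real (pi * 5 / 12) + \<i> * of_real (pi * (-g) / 12)) -
           of_real pi * cot (of_real (pi * 5 / 12) + \<i> * of_real (pi * g / 12)))) / (24 * \<i> * of_real g))
        = of_real (pi / (24 * g) * (X1 - X3))" (is "?lhs = _")
  proof -
    have "?lhs = (of_real pi * (cot (of_real (pi * 1 / 12) + \<i> * of_real (pi * (-g) / 12)) -
            cot (of_real (pi * 1 / 12) + \<i> * of_real (pi * g / 12))) -
          of_real pi * (cot (of_real (pi * 5 / 12) + \<i> * of_real (pi * (-g) / 12)) -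
           cot (of_real (pi * 5 / 12) + \<i> * of_real (pi * g / 12)))) / (24 * \<i> * of_real g)"
      by (simp only: right_diff_distrib)
    also have "\<dots> = (of_real pi * (\<i> * of_real X1) - of_real pi * (\<i> * of_real X3)) / (24 * \<i> * of_real g)"
      by (simp only: c1 c3)
    also have "\<dots> = of_real (pi / (24 * g) * (X1 - X3))"
      using g0 by (simp add: field_simps)
    finally show ?thesis .
  qed
  also have "(\<lambda>l. ((K 1 (-g) l - K 1 g l) - (K 5 (-g) l - K 5 g l)) / (24 * \<i> * of_real g)) =
             (\<lambda>l. of_real (dd g l))"
  proof
    fix l
    have n1: "12 * real l + 12 - 1 = 12 * real l + 11" and n5: "12 * real l + 12 - 5 = 12 * real l + 7"
      by simp_all
    have qd: "Q n (-g) = Q n g + 2 * \<i> * of_real g * of_real (1 / (n^2 + g^2))" for n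
      using Qdiff[OF g0(1), of n] by (simp add: algebra_simps)
    have e: "(K 1 (-g) l - K 1 g l) - (K 5 (-g) l - K 5 g l) = 24 * \<i> * of_real g * of_real (dd g l)"
      unfolding K_def dd_def n1 n5 minus_minus qd
      by (simp add: algebra_simps)
    show "((K 1 (-g) l - K 1 g l) - (K 5 (-g) l - K 5 g l)) / (24 * \<i> * of_real g) = of_real (dd g l)"
      unfolding e using g0 by simp
  qed
  finally show ?thesis by (simp only: sums_of_real_iff)
qed

lemma cosh_triple: "cosh (3 * y) = 4 * cosh y ^ 3 - 3 * cosh (y::real)"
proof -
  have "cosh (3 * y) = cosh (2 * y + y)" by simp
  also have "\<dots> = cosh (2*y) * cosh y + sinh (2*y) * sinh y" by (rule cosh_add)
  also have "\<dots> = (2 * cosh y ^ 2 - 1) * cosh y + 2 * cosh y * (sinh y)^2"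
    by (simp add: cosh_double_cosh sinh_double power2_eq_square)
  also have "\<dots> = 4 * cosh y ^ 3 - 3 * cosh y"
    unfolding sinh_square_eq by (simp add: power2_eq_square power3_eq_cube algebra_simps)
  finally show ?thesis .
qed

lemma final_value:
  assumes y: "y > 0"
  shows "(2 * sinh y / (cosh y - cos (pi / 6)) - 2 * sinh y / (cosh y - cos (5 * pi / 6))) / (2 * (6 * y / pi))
         = pi / (sqrt 3 * y) * sinh (2 * y) / cosh (3 * y)"
proof -
  have c5: "cos (5 * pi / 6) = - (sqrt 3 / 2)"
  proof -
    have "cos (5 * pi / 6) = cos (pi - pi / 6)" by (rule arg_cong[where f=cos]) simp
    also have "\<dots> = - cos (pi / 6)" by (rule cos_pi_minus)
    also have "\<dots> = - (sqrt 3 / 2)" by (simp only: cos_30)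
    finally show ?thesis .
  qed
  define C where "C = cosh y"
  have C1: "C \<ge> 1" unfolding C_def by (rule cosh_real_ge_1)
  have s3: "sqrt 3 < 2"
  proof -
    have "sqrt 3 < sqrt (2^2)" by (subst real_sqrt_less_iff) simp
    then show ?thesis by simp
  qed
  have s3p: "sqrt 3 > 0" by simp
  have s3sq: "sqrt 3 * sqrt 3 = 3" by simp
  have d1: "C - sqrt 3 / 2 > 0" using C1 s3 by linarith
  have d2: "C + sqrt 3 / 2 > 0" using C1 s3p by linarith
  have "1 \<le> C^2" using C1 by (rule one_le_power)
  then have d3: "4 * C^2 - 3 > 0" by linarith
  have h: "4 * C^3 - 3 * C = C * (4 * C^2 - 3)" by (simp add: power2_eq_square power3_eq_cube algebra_simps)
  define r where "r = sqrt 3"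
  have rr: "r * r = 3" and rp: "r > 0" using s3sq s3p by (auto simp: r_def)
  have e1: "2 * sinh y / (C - r / 2) - 2 * sinh y / (C + r / 2) =
            2 * sinh y * ((C + r / 2) - (C - r / 2)) / ((C - r / 2) * (C + r / 2))"
    using d1 d2 by (simp add: field_simps r_def)
  have e2: "(C - r / 2) * (C + r / 2) = (4 * C^2 - 3) / 4"
    using rr by (simp add: algebra_simps power2_eq_square)
  have e3: "1 / r = r / 3" using rr rp by (simp add: field_simps)
  have e4: "pi / (r * y) = pi * r / (3 * y)" using e3 by (simp add: divide_simps)
  have "(2 * sinh y / (C - r / 2) - 2 * sinh y / (C + r / 2)) / (2 * (6 * y / pi))
        = pi / (r * y) * (2 * sinh y * C) / (C * (4 * C^2 - 3))"
    unfolding e1 e2 e4 using d3 y C1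
    by (simp add: field_simps)
  then show ?thesis
    unfolding c5 cos_30 sinh_double cosh_triple C_def[symmetric] h r_def by simp
qed

theorem mainTheorem6:
  fixes s :: real
  assumes "s > 0"
  shows "((\<lambda>x. exp (- s * x) * eta_imag x) has_integral
           (sqrt (pi / s) * sinh (2 * sqrt (pi * s / 3)) / cosh (sqrt (3 * pi * s)))) {0<..}"
proof -
  have s: "s > 0" by fact
  define y where "y = sqrt (pi * s / 3)"
  have y: "y > 0" using s by (simp add: y_def)
  have ysq: "y^2 = pi * s / 3" using s by (simp add: y_def)
  have s_eq: "s = 3 * y^2 / pi" using ysq by (simp add: field_simps)
  define g where "g = 6 * y / pi"
  have g: "g > 0" using y by (simp add: g_def)
  have gsq: "g^2 = 12 * s / pi" unfolding g_def s_eq by (simp add: power2_eq_square field_simps)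
  have gy: "pi * g / 6 = y" by (simp add: g_def)
  define u where "u m = (-1)^m * (1/(s + aa m) - 1/(s + bb m))" for m
  have su: "summable u"
  proof -
    have nn: "0 \<le> 1/(s + aa m) - 1/(s + bb m)" for m
      using aa_pos[of m] aa_le_bb[of m] s by (simp add: frac_le)
    have "summable (\<lambda>m. norm (u m))"
      using summable_coef[OF s] by (simp add: u_def abs_mult abs_of_nonneg[OF nn])
    then show ?thesis by (rule summable_norm_cancel)
  qed
  have G: "(\<lambda>l. sum u {l * 2..<l * 2 + 2}) sums (\<Sum>m. u m)"
    using su by (intro sums_group) (auto simp: summable_sums)
  have inv: "1 / (s + pi * (n::real)^2 / 12) = (12 / pi) * (1 / (n^2 + g^2))" for n
    unfolding gsq using s by (simp add: field_simps)
  have "(\<lambda>l. sum u {l * 2..<l * 2 + 2}) = (\<lambda>l. (12 / pi) * dd g l)"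
  proof
    fix l :: nat
    have "sum u {l * 2..<l * 2 + 2} = u (2 * l) + u (2 * l + 1)"
      by (simp add: numeral_2_eq_2 mult.commute)
    also have "\<dots> = (12 / pi) * dd g l"
      unfolding u_def aa_def bb_def dd_def inv
      by (simp add: algebra_simps)
    finally show "sum u {l * 2..<l * 2 + 2} = (12 / pi) * dd g l" .
  qed
  with G have G2: "(\<lambda>l. (12 / pi) * dd g l) sums (\<Sum>m. u m)" by simp
  have K: "(\<lambda>l. (12 / pi) * dd g l) sums ((12 / pi) * (pi / (24 * g) *
      (2 * sinh (pi * g / 6) / (cosh (pi * g / 6) - cos (pi / 6)) -
       2 * sinh (pi * g / 6) / (cosh (pi * g / 6) - cos (5 * pi / 6)))))"
    using key_sum[OF g] by (intro sums_mult)
  have L: "(\<Sum>m. u m) = (2 * sinh y / (cosh y - cos (pi / 6)) - 2 * sinh y / (cosh y - cos (5 * pi / 6))) / (2 * (6 * y / pi))"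
  proof -
    define D where "D = 2 * sinh y / (cosh y - cos (pi / 6)) - 2 * sinh y / (cosh y - cos (5 * pi / 6))"
    have "(\<Sum>m. u m) = (12 / pi) * (pi / (24 * g) * D)"
      using sums_unique2[OF G2 K] unfolding gy D_def .
    also have "\<dots> = D / (2 * (6 * y / pi))" using y unfolding g_def by (simp add: field_simps)
    finally show ?thesis unfolding D_def .
  qed
  also have "\<dots> = pi / (sqrt 3 * y) * sinh (2 * y) / cosh (3 * y)"
    by (rule final_value[OF y])
  also have "\<dots> = sqrt (pi / s) * sinh (2 * sqrt (pi * s / 3)) / cosh (sqrt (3 * pi * s))"
  proof -
    have a: "sqrt (3 * pi * s) = 3 * y"
    proof -
      have eq: "3 * pi * s = (3 * y)^2" using ysq by (simp add: power2_eq_square algebra_simps)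
      show ?thesis unfolding eq real_sqrt_abs using y by simp
    qed
    have b: "sqrt (pi / s) = pi / (sqrt 3 * y)"
    proof -
      have "pi / s = (pi / (sqrt 3 * y))^2"
        unfolding s_eq using y by (simp add: power2_eq_square field_simps)
      then show ?thesis using y by simp
    qed
    show ?thesis unfolding a b y_def[symmetric] by simp
  qed
  finally have "(\<Sum>m. u m) = sqrt (pi / s) * sinh (2 * sqrt (pi * s / 3)) / cosh (sqrt (3 * pi * s))" .
  with laplace_series[OF s] show ?thesis by (simp add: u_def)
qed

end
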